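(* Let $m,n\in\mathbb{N}$ and let $s_{j,\ell}\in\mathbb{C}$ with $\Re(s_{j,\ell})>0$ for $1\le j\le n$, $1\le\ell\le m$. Then the $n\times n$ matrix \[ \left(\prod_{\ell=1}^{m}\left(1-2^{1-s_{j,\ell}-\overline{s_{k,\ell}}}\right)\Gamma(s_{j,\ell}+\overline{s_{k,\ell}}+1)\zeta(s_{j,\ell}+\overline{s_{k,\ell}})\right)_{j,k=1}^{n} \] is positive semidefinite.
   Context: $\Gamma$ is Euler's Gamma function and $\zeta$ the Riemann zeta function; the product $(1-2^{1-s})\zeta(s)$ is understood as the entire function it defines (the singularity at $s=1$ is removable). A complex matrix $A=(a_{j,k})$ is positive semidefinite if $\sum_{j,k}a_{j,k}z_j\overline{z_k}\ge0$ for all complex $z_j$. *)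

theory Defs
  imports "HOL-Analysis.Analysis" "HOL-Library.Complex_Order"
begin

text \<open>Riemann zeta function on its half-plane of absolute convergence Re s > 1.\<close>
definition zeta_series :: "complex \<Rightarrow> complex" where
  "zeta_series s = (\<Sum>n. 1 / (of_nat (Suc n)) powr s)"

text \<open>The entire function defined by (1 - 2^(1-s)) zeta(s): the unique entire function
  agreeing with (1 - 2^(1-s)) zeta(s) on Re s > 1 (analytic continuation; the
  singularity at s = 1 is removable).\<close>
definition factor_zeta :: "complex \<Rightarrow> complex" where
  "factor_zeta = (THE f. f holomorphic_on UNIV \<and>
      (\<forall>s. 1 < Re s \<longrightarrow> f s = (1 - 2 powr (1 - s)) * zeta_series s))"

definition psd_matrix :: "nat \<Rightarrow> (nat \<Rightarrow> nat \<Rightarrow> complex) \<Rightarrow> bool" where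
  "psd_matrix n a \<longleftrightarrow>
     (\<forall>z :: nat \<Rightarrow> complex. (\<Sum>j=1..n. \<Sum>k=1..n. a j k * z j * cnj (z k)) \<ge> 0)"

end

theory Submission
  imports Defs "HOL-Complex_Analysis.Complex_Analysis"
begin

fun dif :: "nat \<Rightarrow> (complex \<Rightarrow> complex) \<Rightarrow> complex \<Rightarrow> complex" where
  "dif 0 f x = f x"
| "dif (Suc k) f x = dif k f x - dif k f (x + 1)"

lemma dif_cmult: "dif k (\<lambda>x. c * f x) x = c * dif k f x"
  by (induction k arbitrary: x) (auto simp: algebra_simps)

lemma dif_deriv:
  assumes "\<And>y. Re y > 0 \<Longrightarrow> (f has_field_derivative f' y) (at y)"
  shows "Re x > 0 \<Longrightarrow> (dif k f has_field_derivative dif k f' x) (at x)"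
proof (induction k arbitrary: x)
  case 0
  then show ?case using assms by simp
next
  case (Suc k)
  have 1: "(dif k f has_field_derivative dif k f' x) (at x)" using Suc by auto
  have "(dif k f has_field_derivative dif k f' (x+1)) (at (x+1))" using Suc by auto
  hence 2: "((\<lambda>x. dif k f (x + 1)) has_field_derivative dif k f' (x+1)) (at x)"
    using DERIV_shift by blast
  have "dif (Suc k) f = (\<lambda>x. dif k f x - dif k f (x + 1))" by (rule ext) simp
  then show ?case using DERIV_diff[OF 1 2] by simp
qed

lemma dif_deriv_param:
  assumes "\<And>y. Re y > 0 \<Longrightarrow> ((\<lambda>s. g s y) has_field_derivative g' y) (at s)"
  shows "Re x > 0 \<Longrightarrow> ((\<lambda>s. dif k (g s) x) has_field_derivative dif k g' x) (at s)"
proof (induction k arbitrary: x)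
  case 0
  then show ?case using assms by simp
next
  case (Suc k)
  have 1: "((\<lambda>s. dif k (g s) x) has_field_derivative dif k g' x) (at s)" using Suc by auto
  have 2: "((\<lambda>s. dif k (g s) (x+1)) has_field_derivative dif k g' (x+1)) (at s)" using Suc by auto
  show ?case using DERIV_diff[OF 1 2] by simp
qed

lemma powr_deriv_base:
  assumes "Re y > 0"
  shows "((\<lambda>x. x powr c) has_field_derivative (c * y powr (c - 1))) (at y)"
  apply (rule has_field_derivative_powr)
  using assms by (auto simp: complex_nonpos_Reals_iff)

lemma dif_bound:
  fixes x :: real
  assumes "x \<ge> 1" "Re c \<le> real k"
  shows "norm (dif k (\<lambda>y. y powr c) (of_real x)) \<le> (\<Prod>i<k. norm (c - of_nat i)) * x powr (Re c - real k)"
  using assms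
proof (induction k arbitrary: c x)
  case 0
  then show ?case by (simp add: norm_powr_real_powr)
next
  case (Suc k)
  let ?h = "dif k (\<lambda>y. y powr c)"
  let ?B = "norm c * (\<Prod>i<k. norm (c - 1 - of_nat i)) * x powr (Re c - 1 - real k)"
  define S where "S = complex_of_real ` {x..x+1}"
  have cS: "convex S" unfolding S_def
    by (rule convex_linear_image) (auto intro: linear_of_real)
  have der: "(?h has_field_derivative c * dif k (\<lambda>y. y powr (c - 1)) z) (at z within S)"
    if "z \<in> S" for z
  proof -
    have "Re z > 0" using that Suc.prems unfolding S_def by auto
    hence "(?h has_field_derivative dif k (\<lambda>y. c * y powr (c - 1)) z) (at z)"
      by (intro dif_deriv powr_deriv_base)
    thus ?thesis by (simp add: dif_cmult has_field_derivative_at_within)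
  qed
  have bnd: "norm (c * dif k (\<lambda>y. y powr (c - 1)) z) \<le> ?B" if zS: "z \<in> S" for z
  proof -
    obtain t where t: "z = of_real t" "x \<le> t" "t \<le> x + 1" using zS unfolding S_def by auto
    have "norm (dif k (\<lambda>y. y powr (c - 1)) (of_real t)) \<le>
          (\<Prod>i<k. norm (c - 1 - of_nat i)) * t powr (Re (c - 1) - real k)"
      using Suc.IH[of t "c - 1"] Suc.prems t by auto
    also have "\<dots> \<le> (\<Prod>i<k. norm (c - 1 - of_nat i)) * x powr (Re c - 1 - real k)"
      apply (rule mult_left_mono)
      using Suc.prems t by (auto intro!: powr_mono2' prod_nonneg)
    finally show ?thesis using t by (simp add: norm_mult mult.assoc mult_left_mono)
  qed
  have "norm (?h (of_real x) - ?h (of_real x + 1)) \<le> ?B * norm (of_real x - (of_real x + 1) :: complex)"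
    apply (rule field_differentiable_bound[OF cS der bnd])
    unfolding S_def by (auto intro!: image_eqI[where x="x+1"])
  hence "norm (dif (Suc k) (\<lambda>y. y powr c) (of_real x)) \<le> ?B" by simp
  also have "?B = (\<Prod>i<Suc k. norm (c - of_nat i)) * x powr (Re c - real (Suc k))"
  proof -
    have "(\<Prod>i<Suc k. norm (c - of_nat i)) = norm c * (\<Prod>i<k. norm (c - 1 - of_nat i))"
      by (subst prod.lessThan_Suc_shift) (simp add: algebra_simps del: prod.lessThan_Suc)
    moreover have "Re c - 1 - real k = Re c - real (Suc k)" by simp
    ultimately show ?thesis by (simp only:)
  qed
  finally show ?case .
qed


definition tm :: "nat \<Rightarrow> complex \<Rightarrow> nat \<Rightarrow> complex" where
  "tm N s n = (-1)^n * dif N (\<lambda>x. x powr (-s)) (of_nat (Suc n))"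

definition G :: "nat \<Rightarrow> complex \<Rightarrow> complex" where
  "G N s = (\<Sum>k<N. (1/2)^(Suc k) * dif k (\<lambda>x. x powr (-s)) 1) + (1/2)^N * (\<Sum>n. tm N s n)"

lemma tm_bound:
  assumes "- Re s \<le> real N"
  shows "norm (tm N s n) \<le> (\<Prod>i<N. norm (- s - of_nat i)) * real (Suc n) powr (- Re s - real N)"
proof -
  have "norm (dif N (\<lambda>x. x powr (-s)) (of_real (real (Suc n)))) \<le>
        (\<Prod>i<N. norm (- s - of_nat i)) * real (Suc n) powr (Re (-s) - real N)"
    by (rule dif_bound) (use assms in auto)
  thus ?thesis unfolding tm_def by (simp add: norm_mult norm_power)
qed

lemma summable_Suc_powr:
  assumes "a < -1"
  shows "summable (\<lambda>n. real (Suc n) powr a)"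
proof -
  have "summable (\<lambda>n. real n powr a)" using summable_real_powr_iff assms by blast
  hence "summable (\<lambda>n. real (Suc n) powr a)"
    using summable_Suc_iff[of "\<lambda>n. real n powr a"] by simp
  thus ?thesis .
qed

lemma tm_summable:
  assumes "Re s > 1 - real N"
  shows "summable (\<lambda>n. norm (tm N s n))"
proof (rule summable_comparison_test[OF _ summable_mult[OF summable_Suc_powr]])
  show "- Re s - real N < -1" using assms by simp
  show "\<exists>N'. \<forall>n\<ge>N'. norm (norm (tm N s n)) \<le> (\<Prod>i<N. norm (- s - of_nat i)) * real (Suc n) powr (- Re s - real N)"
    using tm_bound[of s N] assms by auto
qed

lemma euler_step:
  fixes b :: "nat \<Rightarrow> complex"
  assumes "summable (\<lambda>n. (-1)^n * b n)"
  shows "(\<lambda>n. (-1)^n * (b n - b (Suc n))) sums (2 * (\<Sum>n. (-1)^n * b n) - b 0)"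
proof -
  define f where "f n = (-1)^n * b n" for n
  define T where "T = suminf f"
  have 1: "f sums T" using assms unfolding f_def T_def by (simp add: summable_sums)
  have 2: "(\<lambda>n. f (Suc n)) sums (T - b 0)"
    using 1 sums_Suc_iff[of f "T - b 0"] by (simp add: f_def)
  have "(\<lambda>n. f n + f (Suc n)) sums (T + (T - b 0))" by (rule sums_add[OF 1 2])
  moreover have "(\<lambda>n. f n + f (Suc n)) = (\<lambda>n. (-1)^n * (b n - b (Suc n)))"
    by (auto simp: f_def algebra_simps)
  ultimately show ?thesis unfolding T_def f_def by simp
qed

lemma G_Suc:
  assumes "Re s > 1 - real N"
  shows "G (Suc N) s = G N s"
proof -
  define b where "b n = dif N (\<lambda>x. x powr (-s)) (of_nat (Suc n))" for n
  have sb: "summable (\<lambda>n. (-1)^n * b n)"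
    using summable_norm_cancel[OF tm_summable[OF assms]] by (simp add: tm_def b_def)
  have "(\<lambda>n. (-1)^n * (b n - b (Suc n))) sums (2 * (\<Sum>n. (-1)^n * b n) - b 0)"
    by (rule euler_step[OF sb])
  moreover have "(\<lambda>n. (-1)^n * (b n - b (Suc n))) = tm (Suc N) s"
    by (auto simp: tm_def b_def add.commute)
  ultimately have "(\<Sum>n. tm (Suc N) s n) = 2 * (\<Sum>n. tm N s n) - b 0"
    by (simp add: sums_iff tm_def b_def)
  moreover have "b 0 = dif N (\<lambda>x. x powr (-s)) 1" by (simp add: b_def)
  ultimately have eqA: "(\<Sum>n. tm (Suc N) s n) = 2 * (\<Sum>n. tm N s n) - dif N (\<lambda>x. x powr (-s)) 1"
    by simp
  show ?thesis unfolding G_def by (simp add: eqA field_simps)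
qed

lemma G_eta:
  assumes "Re s > 1"
  shows "G N s = (\<Sum>n. (-1)^n * of_nat (Suc n) powr (-s))"
proof (induction N)
  case 0
  then show ?case by (simp add: G_def tm_def)
next
  case (Suc N)
  have "Re s > 1 - real N" using assms by simp
  then show ?case using G_Suc Suc by simp
qed


lemma summable_a:
  assumes "Re s > 1"
  shows "summable (\<lambda>n. of_nat (Suc n) powr (-s) :: complex)"
proof -
  have b: "norm (of_nat (Suc n) powr (-s) :: complex) \<le> real (Suc n) powr (- Re s)" for n
  proof -
    have "norm (of_nat (Suc n) powr (-s) :: complex) = Re (of_nat (Suc n)) powr Re (-s)"
      by (rule norm_powr_real_powr) auto
    thus ?thesis by simp
  qed
  have "summable (\<lambda>n. real (Suc n) powr (- Re s))"
    by (rule summable_Suc_powr) (use assms in simp)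
  hence "summable (\<lambda>n. norm (of_nat (Suc n) powr (-s) :: complex))"
    by (rule summable_comparison_test'[where N=0]) (use b in simp)
  thus ?thesis by (rule summable_norm_cancel)
qed

lemma eta_zeta:
  assumes "Re s > 1"
  shows "(\<Sum>n. (-1)^n * of_nat (Suc n) powr (-s)) = (1 - 2 powr (1 - s)) * zeta_series s"
proof -
  define a where "a n = (of_nat (Suc n) powr (-s) :: complex)" for n
  have sa: "summable a" using summable_a[OF assms] unfolding a_def .
  define Z where "Z = suminf a"
  have aZ: "a sums Z" using sa by (simp add: Z_def summable_sums)
  have zs: "zeta_series s = Z"
    unfolding zeta_series_def Z_def a_def by (simp only: powr_minus_divide)
  have odd: "(\<lambda>n. if odd n then a n else 0) sums (2 powr (-s) * Z)"
  proof -
    have R: "(\<lambda>m. (\<lambda>n. if odd n then a n else 0) (2 * m + 1)) sums (2 powr (-s) * Z)"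
    proof -
      have "a (2 * m + 1) = 2 powr (-s) * a m" for m
      proof -
        have "(of_nat (Suc (2 * m + 1)) :: complex) = 2 * of_nat (Suc m)" by simp
        hence "a (2 * m + 1) = (2 * of_nat (Suc m)) powr (-s)" by (simp add: a_def)
        also have "\<dots> = 2 powr (-s) * a m" unfolding a_def
          by (rule powr_times_real) auto
        finally show ?thesis .
      qed
      thus ?thesis using sums_mult[OF aZ, of "2 powr (-s)"] by simp
    qed
    have SM: "strict_mono (\<lambda>m::nat. 2 * m + 1)" by (auto simp: strict_mono_def)
    have Z0: "n \<notin> range (\<lambda>m::nat. 2 * m + 1) \<Longrightarrow> (if odd n then a n else 0) = 0" for n
      by (metis odd_two_times_div_two_succ rangeI)
    show ?thesis using sums_mono_reindex[OF SM, of "\<lambda>n. if odd n then a n else 0", OF Z0] R by simp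
  qed
  have "(\<lambda>n. a n - 2 * (if odd n then a n else 0)) sums (Z - 2 * (2 powr (-s) * Z))"
    by (rule sums_diff[OF aZ sums_mult[OF odd]])
  moreover have "(\<lambda>n. a n - 2 * (if odd n then a n else 0)) = (\<lambda>n. (-1)^n * a n)"
    by (rule ext) (simp add: minus_one_power_iff)
  ultimately have "(\<Sum>n. (-1)^n * a n) = Z - 2 * (2 powr (-s) * Z)" by (simp add: sums_iff)
  also have "\<dots> = (1 - 2 powr (1 - s)) * Z"
  proof -
    have "(2::complex) powr (1 + (-s)) = 2 powr 1 * 2 powr (-s)" by (rule powr_add)
    hence "(2::complex) powr (1 - s) = 2 * 2 powr (-s)" by simp
    thus ?thesis by (simp add: algebra_simps)
  qed
  finally show ?thesis using zs by (simp add: a_def)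
qed

lemma powr_deriv_exp:
  assumes "Re y > 0"
  shows "((\<lambda>s. y powr (-s)) has_field_derivative (- (Ln y * y powr (-s)))) (at s)"
proof -
  have "y \<noteq> 0" using assms by auto
  have "((\<lambda>s. y powr (-s)) has_field_derivative (Ln y * y powr (-s)) * (-1)) (at s)"
    by (rule DERIV_chain2[OF has_field_derivative_powr_right[OF \<open>y \<noteq> 0\<close>]])
       (auto intro!: derivative_eq_intros)
  thus ?thesis by simp
qed

lemma dif1_deriv:
  "((\<lambda>s. dif k (\<lambda>x. x powr (-s)) 1) has_field_derivative dif k (\<lambda>y. - (Ln y * y powr (-s))) 1) (at s)"
  by (rule dif_deriv_param[where g="\<lambda>s x. x powr (-s)"]) (auto intro: powr_deriv_exp)

lemma dif1_holo: "(\<lambda>s. dif k (\<lambda>x. x powr (-s)) 1) holomorphic_on UNIV"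
  using dif1_deriv by (auto simp: holomorphic_on_open)

lemma G_holo: "G N holomorphic_on {s. Re s > 1 - real N}"
proof -
  define H where "H = {s. Re s > 1 - real N}"
  have oH: "open H" unfolding H_def by (rule open_halfspace_Re_gt)
  define f' where "f' n s = (-1)^n * dif N (\<lambda>y. - (Ln y * y powr (-s))) (of_nat (Suc n))" for n s
  have hfd: "((\<lambda>s. tm N s n) has_field_derivative f' n s) (at s)" for n s
  proof -
    have "((\<lambda>s. dif N (\<lambda>x. x powr (-s)) (of_nat (Suc n))) has_field_derivative
            dif N (\<lambda>y. - (Ln y * y powr (-s))) (of_nat (Suc n))) (at s)"
      by (rule dif_deriv_param[where g="\<lambda>s x. x powr (-s)"]) (auto intro: powr_deriv_exp)
    thus ?thesis unfolding tm_def f'_def by (rule DERIV_cmult)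
  qed
  have to_g: "\<exists>d h. 0 < d \<and> summable h \<and> (\<forall>\<^sub>F n in sequentially. \<forall>y\<in>ball x d \<inter> H. norm (tm N y n) \<le> h n)"
    if xH: "x \<in> H" for x
  proof -
    define d where "d = (Re x - (1 - real N)) / 2"
    have d0: "d > 0" using xH by (simp add: H_def d_def)
    define C where "C = (\<Prod>i<N. norm x + d + real i)"
    have S1: "summable (\<lambda>n. C * real (Suc n) powr (- (1 + d)))"
      by (rule summable_mult, rule summable_Suc_powr) (use d0 in simp)
    have E1: "\<forall>\<^sub>F n in sequentially. \<forall>y\<in>ball x d \<inter> H. norm (tm N y n) \<le> C * real (Suc n) powr (- (1 + d))"
    proof (intro always_eventually allI ballI)
      fix n y assume yB: "y \<in> ball x d \<inter> H"
      have dy: "norm (x - y) < d" using yB by (simp add: dist_norm)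
      have ReY: "Re y > 1 - real N + d"
      proof -
        have "Re x - Re y \<le> norm (x - y)" using complex_Re_le_cmod[of "x - y"] by simp
        thus ?thesis using dy unfolding d_def by (simp add: field_simps)
      qed
      have "norm (tm N y n) \<le> (\<Prod>i<N. norm (- y - of_nat i)) * real (Suc n) powr (- Re y - real N)"
        by (rule tm_bound) (use ReY d0 in linarith)
      also have "\<dots> \<le> C * real (Suc n) powr (- (1 + d))"
      proof (rule mult_mono)
        show "(\<Prod>i<N. norm (- y - of_nat i)) \<le> C" unfolding C_def
        proof (rule prod_mono, rule conjI)
          fix i assume "i \<in> {..<N}"
          have "norm (- y - of_nat i) \<le> norm y + real i"
            using norm_triangle_ineq4[of "-y" "of_nat i"] by simp
          also have "norm y \<le> norm x + d"
            using norm_triangle_ineq2[of y x] dy by (simp add: norm_minus_commute)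
          finally show "norm (- y - of_nat i) \<le> norm x + d + real i" by simp
        qed simp
        show "real (Suc n) powr (- Re y - real N) \<le> real (Suc n) powr (- (1 + d))"
          by (rule powr_mono) (use ReY in auto)
      qed (use d0 in \<open>auto simp: C_def intro!: prod_nonneg\<close>)
      finally show "norm (tm N y n) \<le> C * real (Suc n) powr (- (1 + d))" .
    qed
    show ?thesis by (rule exI[of _ d], rule exI[of _ "\<lambda>n. C * real (Suc n) powr (- (1 + d))"]) (use d0 S1 E1 in auto)
  qed
  have "\<exists>g g'. \<forall>x\<in>H. ((\<lambda>n. tm N x n) sums g x) \<and> ((\<lambda>n. f' n x) sums g' x) \<and> (g has_field_derivative g' x) (at x)"
    by (rule series_and_derivative_comparison_local[OF oH hfd to_g])
  then obtain g g' where gg0: "\<forall>x\<in>H. ((\<lambda>n. tm N x n) sums g x) \<and> ((\<lambda>n. f' n x) sums g' x) \<and> (g has_field_derivative g' x) (at x)"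
    by blast
  have gg: "\<And>x. x \<in> H \<Longrightarrow> ((\<lambda>n. tm N x n) sums g x) \<and> (g has_field_derivative g' x) (at x)"
    using gg0 by blast
  have gh: "g holomorphic_on H" using gg oH by (auto simp: holomorphic_on_open)
  have "(\<lambda>s. (\<Sum>k<N. (1/2)^(Suc k) * dif k (\<lambda>x. x powr (-s)) 1) + (1/2)^N * g s) holomorphic_on H"
  proof -
    have hd: "(\<lambda>s. dif k (\<lambda>x. x powr (-s)) 1) holomorphic_on H" for k
      by (rule holomorphic_on_subset[OF dif1_holo]) simp
    show ?thesis by (intro holomorphic_on_add holomorphic_on_sum holomorphic_on_mult holomorphic_on_const hd gh)
  qed
  moreover have "\<And>s. s \<in> H \<Longrightarrow> (\<Sum>k<N. (1/2)^(Suc k) * dif k (\<lambda>x. x powr (-s)) 1) + (1/2)^N * g s = G N s"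
    unfolding G_def using gg by (simp add: sums_iff)
  ultimately show ?thesis unfolding H_def[symmetric] by (rule holomorphic_transform)
qed

lemma G_agree:
  assumes "M \<le> N" "Re s > 1 - real M"
  shows "G N s = G M s"
proof -
  have o1: "open {z. Re z > 1}" by (rule open_halfspace_Re_gt)
  have o2: "open {z. Re z > 1 - real M}" by (rule open_halfspace_Re_gt)
  have ne: "{z. Re z > 1} \<noteq> {}" by (auto intro!: exI[of _ 2])
  have cn: "connected {z. Re z > 1 - real M}" by (rule convex_connected[OF convex_halfspace_Re_gt])
  have sb: "{z. Re z > 1} \<subseteq> {z. Re z > 1 - real M}" by auto
  have h1: "G N holomorphic_on {z. Re z > 1 - real M}"
    by (rule holomorphic_on_subset[OF G_holo]) (use assms in auto)
  have h2: "G M holomorphic_on {z. Re z > 1 - real M}" by (rule G_holo)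
  have ag: "\<And>z. z \<in> {z. Re z > 1} \<Longrightarrow> G N z = G M z" using G_eta by auto
  have zin: "s \<in> {z. Re z > 1 - real M}" using assms by auto
  show ?thesis by (rule analytic_continuation_open[OF o1 o2 ne cn sb h1 h2 ag zin])
qed

definition Nf :: "complex \<Rightarrow> nat" where "Nf s = nat \<lceil>1 - Re s\<rceil> + 1"
definition FF :: "complex \<Rightarrow> complex" where "FF s = G (Nf s) s"

lemma Nf_gt: "Re s > 1 - real (Nf s)"
proof -
  have "real (nat \<lceil>1 - Re s\<rceil>) \<ge> 1 - Re s"
    using le_of_int_ceiling[of "1 - Re s"] by (cases "\<lceil>1 - Re s\<rceil> \<ge> 0") auto
  thus ?thesis unfolding Nf_def by simp
qed

lemma FF_eq:
  assumes "Re s > 1 - real N"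
  shows "FF s = G N s"
proof (cases "Nf s \<le> N")
  case True
  then show ?thesis unfolding FF_def using G_agree[OF True Nf_gt] by simp
next
  case False
  then show ?thesis unfolding FF_def using G_agree[of N "Nf s" s] assms by simp
qed

lemma FF_holo: "FF holomorphic_on UNIV"
proof -
  have "FF holomorphic_on (\<Union>N\<in>UNIV. {z. Re z > 1 - real N})"
  proof (rule holomorphic_on_UN_open)
    fix N :: nat
    show "open {z. Re z > 1 - real N}" by (rule open_halfspace_Re_gt)
    show "FF holomorphic_on {z. Re z > 1 - real N}"
      by (rule holomorphic_transform[OF G_holo]) (auto simp: FF_eq)
  qed
  moreover have "x \<in> (\<Union>N\<in>UNIV. {z. Re z > 1 - real N})" for x
    using Nf_gt[of x] by blast
  hence "(\<Union>N\<in>UNIV. {z. Re z > 1 - real N}) = UNIV" by blast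
  ultimately show ?thesis by simp
qed

lemma FF_zeta: "Re s > 1 \<Longrightarrow> FF s = (1 - 2 powr (1 - s)) * zeta_series s"
  using FF_eq[of 0 s] G_eta[of s 0] eta_zeta[of s] by simp

lemma factor_zeta_FF: "factor_zeta = FF"
  unfolding factor_zeta_def
proof (rule the_equality)
  show "FF holomorphic_on UNIV \<and> (\<forall>s. 1 < Re s \<longrightarrow> FF s = (1 - 2 powr (1 - s)) * zeta_series s)"
    using FF_holo FF_zeta by auto
  fix f assume f: "f holomorphic_on UNIV \<and> (\<forall>s. 1 < Re s \<longrightarrow> f s = (1 - 2 powr (1 - s)) * zeta_series s)"
  have o1: "open {z. Re z > 1}" by (rule open_halfspace_Re_gt)
  have ne: "{z. Re z > 1} \<noteq> {}" by (auto intro!: exI[of _ 2])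
  have ag: "\<And>w. w \<in> {z. Re z > 1} \<Longrightarrow> f w = FF w" using f FF_zeta by simp
  have hf: "f holomorphic_on UNIV" using f by simp
  show "f = FF"
  proof
    fix z
    show "f z = FF z"
      by (rule analytic_continuation_open[OF o1 open_UNIV ne connected_UNIV subset_UNIV hf FF_holo ag UNIV_I])
  qed
qed

lemma factor_zeta_G1: "Re u > 0 \<Longrightarrow> factor_zeta u = G 1 u"
  using FF_eq[of 1 u] by (simp add: factor_zeta_FF)

lemma scale_int:
  fixes f :: "real \<Rightarrow> complex"
  assumes fi: "f absolutely_integrable_on {0<..}" and c: "c > 0"
  shows "((\<lambda>x. f (c * x)) has_integral (integral {0<..} f) /\<^sub>R c) {0<..}"
proof -
  define F where "F = (\<lambda>x::real. indicator {0<..} x *\<^sub>R f x)"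
  have "integrable lebesgue F" using fi by (simp add: set_integrable_def F_def)
  hence hb: "has_bochner_integral lebesgue F (integral\<^sup>L lebesgue F)"
    by (rule has_bochner_integral_integrable)
  have hb2: "has_bochner_integral lebesgue (\<lambda>x. F (0 + c * x)) ((integral\<^sup>L lebesgue F) /\<^sub>R \<bar>c\<bar>)"
    using has_bochner_integral_lebesgue_real_affine_iff[of c F "integral\<^sup>L lebesgue F" 0] hb c by simp
  have eqF: "(\<lambda>x. F (0 + c * x)) = (\<lambda>x. indicator {0<..} x *\<^sub>R f (c * x))"
  proof
    fix x :: real
    have "(0 < c * x) \<longleftrightarrow> (0 < x)" using c by (simp add: zero_less_mult_iff)
    thus "F (0 + c * x) = indicator {0<..} x *\<^sub>R f (c * x)"
      by (simp add: F_def indicator_def)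
  qed
  have si: "set_integrable lebesgue {0<..} (\<lambda>x. f (c * x))"
    using hb2 unfolding eqF set_integrable_def by (simp add: integrable.intros)
  have "((\<lambda>x. f (c * x)) has_integral (LINT x:{0<..}|lebesgue. f (c * x))) {0<..}"
    by (rule has_integral_set_lebesgue[OF si])
  moreover have "(LINT x:{0<..}|lebesgue. f (c * x)) = (integral\<^sup>L lebesgue F) /\<^sub>R c"
    using hb2 c unfolding eqF set_lebesgue_integral_def by (simp add: has_bochner_integral_iff)
  moreover have "integral\<^sup>L lebesgue F = integral {0<..} f"
    using set_lebesgue_integral_eq_integral(2)[OF fi] by (simp add: set_lebesgue_integral_def F_def)
  ultimately show ?thesis by simp
qed

lemma gamma_scaled:
  assumes u: "Re u > 0" and n: "n > 0"
  shows "((\<lambda>x. of_real x powr u * of_real (exp (- (real n * x)))) has_integral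
           Gamma (u + 1) * of_nat n powr (- (u + 1))) {0<..}"
proof -
  define f where "f = (\<lambda>t::real. of_real t powr u / of_real (exp t))"
  have gi: "(f has_integral Gamma (u + 1)) {0<..}"
    using Gamma_integral_complex'[of "u + 1"] u by (simp add: f_def)
  have ai: "f absolutely_integrable_on {0<..}"
    using absolutely_integrable_Gamma_integral[of "u + 1" 1] u by (simp add: f_def)
  have "((\<lambda>x. f (real n * x)) has_integral (integral {0<..} f) /\<^sub>R real n) {0<..}"
    by (rule scale_int[OF ai]) (use n in simp)
  hence h1: "((\<lambda>x. f (real n * x)) has_integral Gamma (u + 1) / of_nat n) {0<..}"
    using integral_unique[OF gi] by (simp add: scaleR_conv_of_real divide_inverse mult.commute)
  have h2: "((\<lambda>x. of_nat n powr (-u) * f (real n * x)) has_integral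
              of_nat n powr (-u) * (Gamma (u + 1) / of_nat n)) {0<..}"
    by (rule has_integral_mult_right[OF h1])
  have eq: "of_nat n powr (-u) * f (real n * x) = of_real x powr u * of_real (exp (- (real n * x)))"
    if "x \<in> {0<..}" for x
  proof -
    have "of_real (real n * x) powr u = (of_nat n * of_real x :: complex) powr u" by simp
    also have "\<dots> = of_nat n powr u * of_real x powr u"
      by (rule powr_times_real) (use that in auto)
    finally have P: "of_real (real n * x) powr u = of_nat n powr u * of_real x powr u" .
    have Q: "(of_nat n :: complex) powr (-u) * of_nat n powr u = 1"
      using n by (simp add: powr_minus)
    have e: "complex_of_real (exp (- (real n * x))) = inverse (of_real (exp (real n * x)))"
      by (simp add: exp_minus)
    have aux: "a * b = 1 \<Longrightarrow> a * (b * X / E) = X * inverse (E::complex)" for a b X E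
      by (metis divide_inverse mult.assoc mult_1)
    show ?thesis unfolding f_def e P by (rule aux[OF Q])
  qed
  have eq2: "of_nat n powr (-u) * (Gamma (u + 1) / of_nat n) = Gamma (u + 1) * of_nat n powr (- (u + 1))"
  proof -
    have "(of_nat n :: complex) powr (- (u + 1)) = of_nat n powr (-u) * of_nat n powr (-1)"
      by (subst powr_add[symmetric]) (simp add: algebra_simps)
    moreover have "(of_nat n :: complex) powr (-1) = 1 / of_nat n"
      using n by (simp add: powr_minus_divide)
    ultimately show ?thesis by simp
  qed
  show ?thesis by (rule has_integral_eq[OF _ h2[unfolded eq2]]) (rule eq)
qed

definition w :: "real \<Rightarrow> real" where "w x = exp (-x) / (1 + exp (-x))^2"
definition SN :: "nat \<Rightarrow> real \<Rightarrow> real" where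
  "SN N x = (\<Sum>n<N. (-1)^n * real (Suc n) * exp (- (real (Suc n) * x)))"

lemma cf_mul:
  fixes y :: real
  shows "(1 - y)^2 * (\<Sum>n<N. real (Suc n) * y^n) = 1 - real (N+1) * y^N + real N * y^(N+1)"
proof (induction N)
  case 0
  then show ?case by simp
next
  case (Suc N)
  have "(1 - y)^2 * (\<Sum>n<Suc N. real (Suc n) * y^n) =
        (1 - y)^2 * (\<Sum>n<N. real (Suc n) * y^n) + (1 - y)^2 * (real (Suc N) * y^N)"
    by (simp add: distrib_left)
  also have "\<dots> = 1 - real (N+1) * y^N + real N * y^(N+1) + (1 - y)^2 * (real (Suc N) * y^N)"
    by (simp only: Suc)
  also have "\<dots> = 1 - real (Suc N + 1) * y^(Suc N) + real (Suc N) * y^(Suc N + 1)"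
    by (simp add: algebra_simps power2_eq_square)
  finally show ?case .
qed

lemma SN_closed:
  "SN N x = exp (-x) * (1 - real (N+1) * (- exp (-x))^N + real N * (- exp (-x))^(N+1)) / (1 + exp (-x))^2"
proof -
  define q where "q = exp (-x)"
  have q0: "q > 0" by (simp add: q_def)
  have e: "exp (- (real (Suc n) * x)) = q ^ (Suc n)" for n
  proof -
    have "exp (real (Suc n) * (-x)) = exp (-x) ^ Suc n" by (rule exp_of_nat_mult)
    thus ?thesis by (simp add: q_def)
  qed
  have pm: "(-q)^n = (-1)^n * q^n" for n by (rule power_minus)
  have "SN N x = (\<Sum>n<N. q * (real (Suc n) * (-q)^n))"
    unfolding SN_def by (intro sum.cong refl) (simp only: e pm power_Suc, simp only: mult_ac)
  also have "\<dots> = q * (\<Sum>n<N. real (Suc n) * (-q)^n)" by (simp add: sum_distrib_left)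
  also have "(\<Sum>n<N. real (Suc n) * (-q)^n) = (1 - real (N+1) * (-q)^N + real N * (-q)^(N+1)) / (1 + q)^2"
  proof -
    have nz: "(1 + q)^2 \<noteq> 0" using q0 by simp
    have "(1 - (-q))^2 * (\<Sum>n<N. real (Suc n) * (-q)^n) = 1 - real (N+1) * (-q)^N + real N * (-q)^(N+1)"
      by (rule cf_mul)
    thus ?thesis using nz by (simp add: field_simps)
  qed
  finally show ?thesis by (simp add: q_def)
qed

lemma nq_bound:
  assumes "x > 0"
  shows "real N * exp (-x) ^ N \<le> 1 / x"
proof (cases "N = 0")
  case True then show ?thesis using assms by simp
next
  case False
  define E where "E = exp (real N * x)"
  have P: "exp (-x) ^ N = inverse E"
    unfolding E_def by (simp only: exp_minus power_inverse exp_of_nat_mult)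
  have NE: "real N * x \<le> E"
    using exp_ge_add_one_self[of "real N * x"] unfolding E_def by linarith
  have Nx: "real N * x > 0" using False assms by simp
  have "real N * exp (-x) ^ N = real N / E" by (simp add: P divide_inverse)
  also have "\<dots> \<le> real N / (real N * x)"
    by (rule divide_left_mono[OF NE]) (use Nx NE in auto)
  also have "\<dots> = 1 / x" using False by simp
  finally show ?thesis .
qed

lemma SN_bound:
  assumes "x > 0"
  shows "\<bar>SN N x\<bar> \<le> exp (-x) * (2 + 2 / x)"
proof -
  define q where "q = exp (-x)"
  have q0: "q > 0" "q \<le> 1" using assms by (auto simp: q_def)
  have nq: "real N * q ^ N \<le> 1 / x" using nq_bound[OF assms] by (simp add: q_def)
  have qN: "q ^ N \<le> 1" using q0 by (simp add: power_le_one)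
  have "\<bar>1 - real (N+1) * (-q)^N + real N * (-q)^(N+1)\<bar> \<le> 1 + real (N+1) * q^N + real N * q^(N+1)"
  proof -
    have B: "\<bar>real (N+1) * (-q)^N\<bar> = real (N+1) * q^N" using q0 by (simp add: abs_mult power_abs)
    have C: "\<bar>real N * (-q)^(N+1)\<bar> = real N * q^(N+1)" using q0 by (simp add: abs_mult power_abs)
    have "\<bar>1 - real (N+1) * (-q)^N + real N * (-q)^(N+1)\<bar> \<le> 1 + \<bar>real (N+1) * (-q)^N\<bar> + \<bar>real N * (-q)^(N+1)\<bar>"
      by (smt (verit))
    thus ?thesis unfolding B C .
  qed
  also have "\<dots> \<le> 1 + (1/x + 1) + 1/x"
  proof -
    have "real (N+1) * q^N = real N * q^N + q^N" by (simp add: algebra_simps)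
    moreover have "real N * q^(N+1) \<le> real N * q^N"
      using q0 by (intro mult_left_mono) (auto intro: mult_left_le_one_le)
    ultimately show ?thesis using nq qN by linarith
  qed
  finally have A: "\<bar>1 - real (N+1) * (-q)^N + real N * (-q)^(N+1)\<bar> \<le> 2 + 2 / x" by simp
  have "\<bar>SN N x\<bar> = q * \<bar>1 - real (N+1) * (-q)^N + real N * (-q)^(N+1)\<bar> / (1 + q)^2"
    unfolding SN_closed q_def[symmetric] using q0 by (simp add: abs_mult)
  also have "\<dots> \<le> q * \<bar>1 - real (N+1) * (-q)^N + real N * (-q)^(N+1)\<bar>"
  proof -
    have "1 \<le> (1 + q)^2" using q0 by (simp add: one_le_power)
    hence "q * \<bar>1 - real (N+1) * (-q)^N + real N * (-q)^(N+1)\<bar> / (1 + q)^2 \<le>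
           q * \<bar>1 - real (N+1) * (-q)^N + real N * (-q)^(N+1)\<bar> / 1"
      by (intro divide_left_mono) (use q0 in auto)
    thus ?thesis by simp
  qed
  also have "\<dots> \<le> q * (2 + 2 / x)" using A q0 by (simp add: mult_left_mono)
  finally show ?thesis by (simp add: q_def)
qed

lemma SN_lim:
  assumes "x > 0"
  shows "(\<lambda>N. SN N x) \<longlonglongrightarrow> w x"
proof -
  define q where "q = exp (-x)"
  have q0: "q > 0" "q < 1" using assms by (auto simp: q_def)
  have n1: "norm (-q) < 1" using q0 by simp
  have t1: "(\<lambda>N. (-q)^N) \<longlonglongrightarrow> 0" by (rule LIMSEQ_power_zero[OF n1])
  have t2: "(\<lambda>N. real N * (-q)^N) \<longlonglongrightarrow> 0" using powser_times_n_limit_0[OF n1] by simp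
  have "(\<lambda>N. q * (1 - (real N * (-q)^N + (-q)^N) + (-q) * (real N * (-q)^N)) / (1+q)^2)
          \<longlonglongrightarrow> q * (1 - (0 + 0) + (-q) * 0) / (1+q)^2"
    using q0 n1 by (intro tendsto_intros t1 t2) auto
  moreover have "(\<lambda>N. q * (1 - (real N * (-q)^N + (-q)^N) + (-q) * (real N * (-q)^N)) / (1+q)^2) = (\<lambda>N. SN N x)"
    unfolding SN_closed q_def[symmetric] by (rule ext) (simp add: algebra_simps)
  ultimately show ?thesis by (simp add: w_def q_def)
qed


lemma nat_powr_shift:
  "(of_nat (Suc n) :: complex) * of_nat (Suc n) powr (- (u + 1)) = of_nat (Suc n) powr (-u)"
proof -
  have "(of_nat (Suc n) :: complex) powr (1 + (- (u + 1))) = of_nat (Suc n) powr 1 * of_nat (Suc n) powr (- (u + 1))"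
    by (rule powr_add)
  moreover have "(1 + (- (u + 1))) = -u" by simp
  ultimately show ?thesis by simp
qed

lemma fN_integral:
  assumes u: "Re u > 0"
  shows "((\<lambda>x. of_real x powr u * complex_of_real (SN N x)) has_integral
           Gamma (u + 1) * (\<Sum>n<N. (-1)^n * of_nat (Suc n) powr (-u))) {0<..}"
proof -
  define c where "c n = ((-1)^n * of_nat (Suc n) :: complex)" for n
  have "((\<lambda>x. \<Sum>n<N. c n * (of_real x powr u * of_real (exp (- (real (Suc n) * x))))) has_integral
          (\<Sum>n<N. c n * (Gamma (u + 1) * of_nat (Suc n) powr (- (u + 1))))) {0<..}"
    by (intro has_integral_sum finite_lessThan has_integral_mult_right gamma_scaled[OF u]) simp
  moreover have "(\<Sum>n<N. c n * (Gamma (u + 1) * of_nat (Suc n) powr (- (u + 1)))) =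
                 Gamma (u + 1) * (\<Sum>n<N. (-1)^n * of_nat (Suc n) powr (-u))"
    unfolding sum_distrib_left
  proof (rule sum.cong[OF refl])
    fix n
    have "c n * (Gamma (u + 1) * of_nat (Suc n) powr (- (u + 1))) =
          Gamma (u + 1) * ((-1)^n * (of_nat (Suc n) * of_nat (Suc n) powr (- (u + 1))))"
      by (simp add: c_def)
    thus "c n * (Gamma (u + 1) * of_nat (Suc n) powr (- (u + 1))) =
          Gamma (u + 1) * ((-1)^n * of_nat (Suc n) powr (-u))"
      by (simp only: nat_powr_shift)
  qed
  moreover have "(\<Sum>n<N. c n * (of_real x powr u * of_real (exp (- (real (Suc n) * x))))) =
                 of_real x powr u * complex_of_real (SN N x)" for x
    unfolding SN_def of_real_sum sum_distrib_left
    by (intro sum.cong refl) (simp add: c_def)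
  ultimately show ?thesis by simp
qed

lemma int_conv:
  assumes u: "Re u > 0"
  shows "(\<lambda>x. of_real x powr u * complex_of_real (w x)) integrable_on {0<..}"
    "(\<lambda>N. Gamma (u + 1) * (\<Sum>n<N. (-1)^n * of_nat (Suc n) powr (-u))) \<longlonglongrightarrow>
        integral {0<..} (\<lambda>x. of_real x powr u * complex_of_real (w x))"
proof -
  define \<sigma> where "\<sigma> = Re u"
  define k1 where "k1 = (\<lambda>x::real. of_real x powr (of_real (\<sigma> + 1) - 1) / of_real (exp (1 * x)) :: complex)"
  define k2 where "k2 = (\<lambda>x::real. of_real x powr (of_real \<sigma> - 1) / of_real (exp (1 * x)) :: complex)"
  have a1: "k1 absolutely_integrable_on {0<..}" unfolding k1_def
    by (rule absolutely_integrable_Gamma_integral) (use u in \<open>auto simp: \<sigma>_def\<close>)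
  have a2: "k2 absolutely_integrable_on {0<..}" unfolding k2_def
    by (rule absolutely_integrable_Gamma_integral) (use u in \<open>auto simp: \<sigma>_def\<close>)
  define h where "h = (\<lambda>x. (norm (k1 x) + norm (k1 x)) + (norm (k2 x) + norm (k2 x)))"
  have hi: "h integrable_on {0<..}" unfolding h_def
    using a1 a2 unfolding absolutely_integrable_on_def by (intro integrable_add) auto
  define fN where "fN = (\<lambda>N x. of_real x powr u * complex_of_real (SN N x))"
  have fi: "fN N integrable_on {0<..}" for N
    using fN_integral[OF u, of N] unfolding fN_def by blast
  have le: "norm (fN N x) \<le> h x" if x: "x \<in> {0<..}" for N x
  proof -
    have x0: "x > 0" using x by simp
    have p1: "norm (complex_of_real x powr complex_of_real \<sigma>) = x powr \<sigma>"
      using norm_powr_real_powr[of "complex_of_real x" "complex_of_real \<sigma>"] x0 by simp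
    have n1: "norm (k1 x) = x powr \<sigma> * exp (-x)"
      unfolding k1_def using x0 by (simp add: norm_divide norm_mult p1 exp_minus divide_inverse norm_inverse)
    have p2: "norm (complex_of_real x powr (complex_of_real \<sigma> - 1)) = x powr (\<sigma> - 1)"
      using norm_powr_real_powr[of "complex_of_real x" "complex_of_real \<sigma> - 1"] x0 by simp
    have n2: "norm (k2 x) = x powr (\<sigma> - 1) * exp (-x)"
      unfolding k2_def using x0 by (simp add: norm_divide norm_mult p2 exp_minus divide_inverse norm_inverse)
    have pw: "x powr (\<sigma> - 1) = x powr \<sigma> / x" using x0 by (simp add: powr_diff)
    have "norm (fN N x) = x powr \<sigma> * \<bar>SN N x\<bar>"
      unfolding fN_def using x0 by (simp add: norm_mult norm_powr_real_powr \<sigma>_def)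
    also have "\<dots> \<le> x powr \<sigma> * (exp (-x) * (2 + 2 / x))"
      by (rule mult_left_mono[OF SN_bound[OF x0]]) simp
    also have "\<dots> = h x" unfolding h_def n1 n2 pw by (simp add: field_simps)
    finally show ?thesis .
  qed
  have conv: "(\<lambda>N. fN N x) \<longlonglongrightarrow> of_real x powr u * complex_of_real (w x)" if "x \<in> {0<..}" for x
    unfolding fN_def using that by (intro tendsto_intros SN_lim) auto
  note dc = dominated_convergence[OF fi hi le conv]
  show "(\<lambda>x. of_real x powr u * complex_of_real (w x)) integrable_on {0<..}" by (rule dc(1))
  have "integral {0<..} (fN N) = Gamma (u + 1) * (\<Sum>n<N. (-1)^n * of_nat (Suc n) powr (-u))" for N
    using fN_integral[OF u, of N] unfolding fN_def by (rule integral_unique)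
  thus "(\<lambda>N. Gamma (u + 1) * (\<Sum>n<N. (-1)^n * of_nat (Suc n) powr (-u))) \<longlonglongrightarrow>
        integral {0<..} (\<lambda>x. of_real x powr u * complex_of_real (w x))" using dc(2) by simp
qed

lemma E_lim:
  assumes u: "Re u > 0"
  shows "(\<lambda>N. (\<Sum>n<N. (-1)^n * of_nat (Suc n) powr (-u))) \<longlonglongrightarrow> G 1 u"
proof -
  define a where "a N = (of_nat (Suc N) powr (-u) :: complex)" for N
  define E where "E N = (\<Sum>n<N. (-1)^n * a n)" for N
  define P where "P N = (\<Sum>n<N. tm 1 u n)" for N
  have tmeq: "tm 1 u n = (-1)^n * (a n - a (Suc n))" for n
    by (simp add: tm_def a_def add.commute)
  have PE: "P N = 2 * E N + (-1)^N * a N - 1" for N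
  proof (induction N)
    case 0
    then show ?case by (simp add: P_def E_def a_def)
  next
    case (Suc N)
    have "P (Suc N) = P N + (-1)^N * (a N - a (Suc N))" by (simp add: P_def tmeq tmeq[unfolded One_nat_def])
    also have "\<dots> = 2 * E (Suc N) + (-1)^(Suc N) * a (Suc N) - 1"
      unfolding Suc by (simp add: E_def algebra_simps)
    finally show ?case .
  qed
  have sm: "summable (tm 1 u)"
    using summable_norm_cancel[OF tm_summable[of 1 u]] u by simp
  have Plim: "P \<longlonglongrightarrow> (\<Sum>n. tm 1 u n)"
    unfolding P_def by (rule summable_LIMSEQ[OF sm])
  have alim: "(\<lambda>N. (-1)^N * a N) \<longlonglongrightarrow> 0"
  proof (rule tendsto_norm_zero_cancel)
    have "filterlim (\<lambda>N. real (Suc N)) at_top sequentially"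
      using filterlim_sequentially_Suc[of real at_top] filterlim_real_sequentially by simp
    hence "(\<lambda>N. real (Suc N) powr (- Re u)) \<longlonglongrightarrow> 0"
      using tendsto_neg_powr[of "- Re u" "\<lambda>N. real (Suc N)" sequentially] u by simp
    moreover have "norm ((-1)^N * a N) = real (Suc N) powr (- Re u)" for N
    proof -
      have "norm (a N) = Re (of_nat (Suc N)) powr Re (-u)"
        unfolding a_def by (rule norm_powr_real_powr) auto
      thus ?thesis by (simp add: norm_mult norm_power)
    qed
    ultimately show "(\<lambda>N. norm ((-1)^N * a N)) \<longlonglongrightarrow> 0" by simp
  qed
  have "(\<lambda>N. (P N + 1 - (-1)^N * a N) / 2) \<longlonglongrightarrow> ((\<Sum>n. tm 1 u n) + 1 - 0) / 2"
    by (intro tendsto_intros Plim alim) simp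
  moreover have "(\<lambda>N. (P N + 1 - (-1)^N * a N) / 2) = E" by (rule ext) (simp add: PE)
  moreover have "((\<Sum>n. tm 1 u n) + 1 - 0) / 2 = G 1 u" by (simp add: G_def)
  ultimately show ?thesis unfolding E_def a_def by simp
qed

lemma K_int:
  assumes u: "Re u > 0"
  shows "((\<lambda>x. of_real x powr u * complex_of_real (w x)) has_integral factor_zeta u * Gamma (u + 1)) {0<..}"
proof -
  have "(\<lambda>N. Gamma (u + 1) * (\<Sum>n<N. (-1)^n * of_nat (Suc n) powr (-u))) \<longlonglongrightarrow> Gamma (u + 1) * G 1 u"
    by (intro tendsto_intros E_lim[OF u])
  hence "integral {0<..} (\<lambda>x. of_real x powr u * complex_of_real (w x)) = Gamma (u + 1) * G 1 u"
    using int_conv(2)[OF u] LIMSEQ_unique by blast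
  thus ?thesis using integrable_integral[OF int_conv(1)[OF u]] factor_zeta_G1[OF u]
    by (simp add: mult.commute)
qed

lemma has_integral_nonneg_complex:
  fixes f :: "real \<Rightarrow> complex"
  assumes "(f has_integral I) S" "\<And>x. x \<in> S \<Longrightarrow> f x \<ge> 0"
  shows "I \<ge> 0"
proof -
  have re: "((\<lambda>x. Re (f x)) has_integral Re I) S"
    using has_integral_linear[OF assms(1) bounded_linear_Re] by (simp add: o_def)
  have im: "((\<lambda>x. Im (f x)) has_integral Im I) S"
    using has_integral_linear[OF assms(1) bounded_linear_Im] by (simp add: o_def)
  have "Re I \<ge> 0"
    by (rule has_integral_nonneg[OF re]) (use assms(2) in \<open>auto simp: less_eq_complex_def\<close>)
  moreover have "((\<lambda>x. 0::real) has_integral Im I) S"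
    by (rule has_integral_eq[OF _ im]) (use assms(2) in \<open>auto simp: less_eq_complex_def\<close>)
  hence "Im I = 0" using has_integral_unique[OF _ has_integral_0] by blast
  ultimately show ?thesis by (simp add: less_eq_complex_def)
qed

lemma powr_gram:
  assumes "x > 0"
  shows "complex_of_real x powr (a + cnj b) = of_real x powr a * cnj (of_real x powr b)"
proof -
  have "cnj (complex_of_real x powr b) = cnj (of_real x) powr cnj b"
    by (rule cnj_powr) (use assms in simp)
  thus ?thesis by (simp add: powr_add)
qed

lemma psd_prod:
  fixes n m :: nat and s :: "nat \<Rightarrow> nat \<Rightarrow> complex" and z :: "nat \<Rightarrow> complex"
  assumes "\<And>j l. j \<in> {1..n} \<Longrightarrow> l \<in> {1..m} \<Longrightarrow> Re (s j l) > 0"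
  shows "(\<Sum>j=1..n. \<Sum>k=1..n. (\<Prod>l=1..m.
            factor_zeta (s j l + cnj (s k l)) * Gamma (s j l + cnj (s k l) + 1)) * z j * cnj (z k)) \<ge> 0"
  using assms
proof (induction m arbitrary: z)
  case 0
  have "(\<Sum>j=1..n. \<Sum>k=1..n. (\<Prod>l\<in>{1..0::nat}.
            factor_zeta (s j l + cnj (s k l)) * Gamma (s j l + cnj (s k l) + 1)) * z j * cnj (z k))
        = (\<Sum>j=1..n. z j) * cnj (\<Sum>k=1..n. z k)"
    by (simp add: sum_distrib_left sum_distrib_right, rule sum.swap)
  also have "\<dots> = of_real ((norm (\<Sum>j=1..n. z j))\<^sup>2)" by (rule complex_norm_square[symmetric])
  also have "\<dots> \<ge> 0" by (simp add: less_eq_complex_def)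
  finally show ?case by simp
next
  case (Suc m)
  define Kf where "Kf u = factor_zeta u * Gamma (u + 1)" for u
  define a where "a j = s j (Suc m)" for j
  define P where "P j k = (\<Prod>l=1..m. Kf (s j l + cnj (s k l)))" for j k
  have IH: "(\<Sum>j=1..n. \<Sum>k=1..n. P j k * z' j * cnj (z' k)) \<ge> 0" for z'
    using Suc.IH[of z'] Suc.prems unfolding P_def Kf_def by auto
  have prodeq: "(\<Prod>l=1..Suc m. factor_zeta (s j l + cnj (s k l)) * Gamma (s j l + cnj (s k l) + 1))
        = P j k * Kf (a j + cnj (a k))" for j k
    unfolding P_def Kf_def a_def by (simp add: prod.nat_ivl_Suc' mult.commute)
  have hint: "((\<lambda>x. of_real x powr a j * cnj (of_real x powr a k) * complex_of_real (w x))
                 has_integral Kf (a j + cnj (a k))) {0<..}" if "j \<in> {1..n}" "k \<in> {1..n}" for j k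
  proof -
    have "Re (a j) > 0" "Re (a k) > 0" using Suc.prems that by (auto simp: a_def)
    hence "Re (a j + cnj (a k)) > 0" by simp
    from K_int[OF this]
    have "((\<lambda>x. of_real x powr (a j + cnj (a k)) * complex_of_real (w x)) has_integral Kf (a j + cnj (a k))) {0<..}"
      by (simp add: Kf_def)
    thus ?thesis by (rule has_integral_eq[rotated]) (simp add: powr_gram)
  qed
  define c where "c j k = P j k * z j * cnj (z k)" for j k
  have hsum: "((\<lambda>x. \<Sum>j=1..n. \<Sum>k=1..n. c j k * (of_real x powr a j * cnj (of_real x powr a k) * complex_of_real (w x)))
        has_integral (\<Sum>j=1..n. \<Sum>k=1..n. c j k * Kf (a j + cnj (a k)))) {0<..}"
    by (intro has_integral_sum finite_atLeastAtMost has_integral_mult_right hint) auto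
  have eqT: "(\<Sum>j=1..n. \<Sum>k=1..n. (\<Prod>l=1..Suc m. factor_zeta (s j l + cnj (s k l)) * Gamma (s j l + cnj (s k l) + 1)) * z j * cnj (z k))
        = (\<Sum>j=1..n. \<Sum>k=1..n. c j k * Kf (a j + cnj (a k)))"
    unfolding prodeq c_def by (simp add: mult_ac)
  have nn: "(\<Sum>j=1..n. \<Sum>k=1..n. c j k * (of_real x powr a j * cnj (of_real x powr a k) * complex_of_real (w x))) \<ge> 0"
    if "x \<in> {0<..}" for x
  proof -
    define z' where "z' j = z j * of_real x powr a j" for j
    have "(\<Sum>j=1..n. \<Sum>k=1..n. c j k * (of_real x powr a j * cnj (of_real x powr a k) * complex_of_real (w x)))
        = (\<Sum>j=1..n. \<Sum>k=1..n. P j k * z' j * cnj (z' k)) * complex_of_real (w x)"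
      unfolding sum_distrib_right c_def z'_def by (simp add: mult_ac)
    moreover have "complex_of_real (w x) \<ge> 0"
      by (simp add: less_eq_complex_def w_def)
    ultimately show ?thesis using IH[of z'] by (simp add: mult_nonneg_nonneg)
  qed
  show ?case unfolding eqT by (rule has_integral_nonneg_complex[OF hsum nn])
qed

theorem mainTheorem9:
  fixes m n :: nat and s :: "nat \<Rightarrow> nat \<Rightarrow> complex"
  assumes "\<And>j l. 1 \<le> j \<Longrightarrow> j \<le> n \<Longrightarrow> 1 \<le> l \<Longrightarrow> l \<le> m \<Longrightarrow> Re (s j l) > 0"
  shows "psd_matrix n (\<lambda>j k. \<Prod>l=1..m.
            factor_zeta (s j l + cnj (s k l)) * Gamma (s j l + cnj (s k l) + 1))"
  unfolding psd_matrix_def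
proof
  fix z :: "nat \<Rightarrow> complex"
  show "(\<Sum>j=1..n. \<Sum>k=1..n. (\<Prod>l=1..m.
            factor_zeta (s j l + cnj (s k l)) * Gamma (s j l + cnj (s k l) + 1)) * z j * cnj (z k)) \<ge> 0"
    by (rule psd_prod) (use assms in auto)
qed

end
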